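(* (i) For a first countable topological space $(X,\tau)$ the following are equivalent: (1) $X$ is Hausdorff; (2) $X$ is a kd-space; (3) $X$ is a kc-space; (4) $X$ is a US-space. (ii) A semi-regular topological space $(X,\tau)$ is a kd-space if and only if it is a kc-space.
   Context: $X$ is a kc-space if every compact subset of $X$ is closed; $X$ is a kd-space if every compact subset of $X$ is $\delta$-closed, where $A$ is $\delta$-closed if every point $x$ such that $A\cap U\ne\emptyset$ for all regular open $U\ni x$ (regular open meaning $U=\mathrm{Int}(\mathrm{Cl}(U))$) belongs to $A$. $X$ is a US-space (unique sequence space) if every convergent sequence has a unique limit. $X$ is semi-regular if the regular open sets form a base for $\tau$. *)

theory Defs
  imports "HOL-Analysis.Analysis"
begin

definition regular_openin :: "'a topology \<Rightarrow> 'a set \<Rightarrow> bool" where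
  "regular_openin X U \<longleftrightarrow> U = X interior_of (X closure_of U)"

definition delta_closedin :: "'a topology \<Rightarrow> 'a set \<Rightarrow> bool" where
  "delta_closedin X A \<longleftrightarrow> A \<subseteq> topspace X \<and>
     (\<forall>x \<in> topspace X. (\<forall>U. regular_openin X U \<and> x \<in> U \<longrightarrow> A \<inter> U \<noteq> {}) \<longrightarrow> x \<in> A)"

definition kd_space :: "'a topology \<Rightarrow> bool" where
  "kd_space X \<longleftrightarrow> (\<forall>K. compactin X K \<longrightarrow> delta_closedin X K)"

definition US_space :: "'a topology \<Rightarrow> bool" where
  "US_space X \<longleftrightarrow> (\<forall>(s :: nat \<Rightarrow> 'a) l m. (\<forall>n. s n \<in> topspace X) \<and>
      limitin X s l sequentially \<and> limitin X s m sequentially \<longrightarrow> l = m)"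

definition semi_regular :: "'a topology \<Rightarrow> bool" where
  "semi_regular X \<longleftrightarrow> (\<forall>U x. openin X U \<and> x \<in> U \<longrightarrow>
      (\<exists>V. regular_openin X V \<and> x \<in> V \<and> V \<subseteq> U))"

end

theory Submission
  imports Defs
begin

lemma reg_int_cl: "regular_openin X (X interior_of (X closure_of V))"
proof -
  let ?W = "X interior_of (X closure_of V)"
  have a: "X closure_of ?W \<subseteq> X closure_of V"
    by (metis closure_of_closure_of closure_of_mono interior_of_subset)
  have "X interior_of (X closure_of ?W) \<subseteq> ?W"
    using a interior_of_mono by blast
  moreover have "?W \<subseteq> X interior_of (X closure_of ?W)"
    by (meson closure_of_subset interior_of_maximal openin_interior_of openin_subset)
  ultimately show ?thesis unfolding regular_openin_def by blast
qed

lemma reg_open: "regular_openin X U \<Longrightarrow> openin X U"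
  unfolding regular_openin_def by (metis openin_interior_of)

lemma kd_imp_kc: "kd_space X \<Longrightarrow> kc_space X"
  unfolding kd_space_def kc_space_def
proof (intro allI impI)
  fix K assume h: "\<forall>K. compactin X K \<longrightarrow> delta_closedin X K" and K: "compactin X K"
  then have d: "delta_closedin X K" by blast
  have "openin X (topspace X - K)"
    unfolding openin_subopen[of X "topspace X - K"]
  proof
    fix x assume x: "x \<in> topspace X - K"
    then obtain U where "regular_openin X U" "x \<in> U" "K \<inter> U = {}"
      using d unfolding delta_closedin_def by blast
    then show "\<exists>T. openin X T \<and> x \<in> T \<and> T \<subseteq> topspace X - K"
      using reg_open openin_subset by (metis Diff_iff disjoint_iff subsetD subsetI)
  qed
  then show "closedin X K" using K
    by (simp add: closedin_def compactin_subset_topspace)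
qed

lemma semi_kc_kd:
  assumes s: "\<forall>U x. openin X U \<and> x \<in> U \<longrightarrow> (\<exists>V. regular_openin X V \<and> x \<in> V \<and> V \<subseteq> U)"
    and k: "\<forall>S. compactin X S \<longrightarrow> closedin X S"
  shows "kd_space X"
  unfolding kd_space_def delta_closedin_def
proof (intro allI impI)
  fix K
  assume K: "compactin X K"
  show "K \<subseteq> topspace X \<and> (\<forall>x \<in> topspace X. (\<forall>U. regular_openin X U \<and> x \<in> U \<longrightarrow> K \<inter> U \<noteq> {}) \<longrightarrow> x \<in> K)"
  proof (intro conjI ballI impI)
  show "K \<subseteq> topspace X" using K compactin_subset_topspace by blast
  fix x assume x: "x \<in> topspace X" and r: "\<forall>U. regular_openin X U \<and> x \<in> U \<longrightarrow> K \<inter> U \<noteq> {}"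
  show "x \<in> K"
  proof (rule ccontr)
    assume "x \<notin> K"
    moreover have "openin X (topspace X - K)" using k K by blast
    ultimately obtain V where "regular_openin X V" "x \<in> V" "V \<subseteq> topspace X - K"
      using s x by blast
    then show False using r by blast
  qed
  qed
qed

lemma Hausdorff_kd: assumes H: "Hausdorff_space X" shows "kd_space X"
  unfolding kd_space_def delta_closedin_def
proof (intro allI impI)
  fix K
  assume K: "compactin X K"
  show "K \<subseteq> topspace X \<and> (\<forall>x \<in> topspace X. (\<forall>U. regular_openin X U \<and> x \<in> U \<longrightarrow> K \<inter> U \<noteq> {}) \<longrightarrow> x \<in> K)"
  proof (intro conjI ballI impI)
  show "K \<subseteq> topspace X" using K compactin_subset_topspace by blast
  fix x assume x: "x \<in> topspace X" and r: "\<forall>U. regular_openin X U \<and> x \<in> U \<longrightarrow> K \<inter> U \<noteq> {}"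
  show "x \<in> K"
  proof (rule ccontr)
    assume "x \<notin> K"
    then have "disjnt K {x}" by simp
    moreover have "compactin X {x}" using x by simp
    ultimately obtain U V where UV: "openin X U" "openin X V" "K \<subseteq> U" "{x} \<subseteq> V" "disjnt U V"
      using Hausdorff_space_compact_separation[OF H K] by metis
    let ?W = "X interior_of (X closure_of V)"
    have "closedin X (topspace X - U)" using UV by blast
    moreover have "V \<subseteq> topspace X - U" using UV openin_subset[of X V] by (auto simp: disjnt_def)
    ultimately have c: "X closure_of V \<subseteq> topspace X - U" by (rule closure_of_minimal[rotated])
    have "?W \<subseteq> X closure_of V" by (rule interior_of_subset)
    then have w1: "?W \<inter> K = {}" using UV(3) c by blast
    have "V \<subseteq> X closure_of V" using UV(2) by (simp add: closure_of_subset openin_subset)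
    then have "V \<subseteq> ?W" using UV(2) by (rule interior_of_maximal)
    then have "x \<in> ?W" using UV(4) by blast
    then show False using w1 r reg_int_cl by blast
  qed
  qed
qed

lemma kc_US: assumes k: "kc_space X" shows "US_space X"
  unfolding US_space_def
proof (intro allI impI)
  fix s :: "nat \<Rightarrow> 'a" and l m
  assume "(\<forall>n. s n \<in> topspace X) \<and> limitin X s l sequentially \<and> limitin X s m sequentially"
  then have "limitin X s l sequentially" "limitin X s m sequentially" by simp_all
  then show "l = m" by (rule limitin_kc_unique[OF k])
qed

lemma fc_base:
  assumes "first_countable X" "x \<in> topspace X"
  shows "\<exists>U::nat\<Rightarrow>'a set. (\<forall>n. openin X (U n) \<and> x \<in> U n) \<and> (\<forall>n m. n \<le> m \<longrightarrow> U m \<subseteq> U n)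
          \<and> (\<forall>W. openin X W \<and> x \<in> W \<longrightarrow> (\<exists>n. U n \<subseteq> W))"
proof -
  have "\<exists>B. countable B \<and> (\<forall>V\<in>B. openin X V) \<and>
    (\<forall>U. openin X U \<and> x \<in> U \<longrightarrow> (\<exists>V\<in>B. x \<in> V \<and> V \<subseteq> U))"
    using assms(1) assms(2) unfolding first_countable_def by (rule bspec)
  then obtain B where B0: "countable B \<and> (\<forall>V\<in>B. openin X V) \<and>
    (\<forall>U. openin X U \<and> x \<in> U \<longrightarrow> (\<exists>V\<in>B. x \<in> V \<and> V \<subseteq> U))" by (rule exE)
  note B = conjunct1[OF B0] conjunct1[OF conjunct2[OF B0]] conjunct2[OF conjunct2[OF B0]]
  define B' where "B' = B \<inter> {V. x \<in> V}"
  have cB': "countable B'" using B(1) unfolding B'_def by simp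
  have "openin X (topspace X) \<and> x \<in> topspace X" using assms(2) by simp
  then obtain V0 where "V0 \<in> B" "x \<in> V0" using B(3) by blast
  then have ne: "B' \<noteq> {}" unfolding B'_def by blast
  define b where "b = from_nat_into B'"
  have rb: "range b = B'" unfolding b_def using range_from_nat_into[OF ne cB'] .
  have bB: "b k \<in> B \<and> x \<in> b k" for k
  proof -
    have "b k \<in> B'" using rb by blast
    then show ?thesis unfolding B'_def by simp
  qed
  define U where "U n = \<Inter> (b ` {..n})" for n
  have "openin X (U n) \<and> x \<in> U n" for n
  proof
    show "openin X (U n)" unfolding U_def
    proof (rule openin_Inter)
      show "finite (b ` {..n})" by simp
      show "b ` {..n} \<noteq> {}" by simp
      show "\<And>Y. Y \<in> b ` {..n} \<Longrightarrow> openin X Y" using bB B(2) by blast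
    qed
    show "x \<in> U n" unfolding U_def using bB by blast
  qed
  moreover have "\<forall>n m. n \<le> m \<longrightarrow> U m \<subseteq> U n" unfolding U_def by auto
  moreover have "\<forall>W. openin X W \<and> x \<in> W \<longrightarrow> (\<exists>n. U n \<subseteq> W)"
  proof (intro allI impI)
    fix W assume W: "openin X W \<and> x \<in> W"
    then obtain V where "V \<in> B" "x \<in> V" "V \<subseteq> W" using B(3) by blast
    then have "V \<in> range b" using rb unfolding B'_def by blast
    then obtain k where "V = b k" by blast
    then have "U k \<subseteq> W" unfolding U_def using \<open>V \<subseteq> W\<close> by auto
    then show "\<exists>n. U n \<subseteq> W" by blast
  qed
  ultimately show ?thesis by blast
qed

lemma seq_lim:
  assumes U: "(\<forall>n. openin X (U n) \<and> x \<in> U n) \<and> (\<forall>n m. n \<le> m \<longrightarrow> U m \<subseteq> U n)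
          \<and> (\<forall>W. openin X W \<and> x \<in> W \<longrightarrow> (\<exists>n. U n \<subseteq> W))"
    and s: "\<forall>n. s n \<in> U n" and x: "x \<in> topspace X"
  shows "limitin X s x sequentially"
  unfolding limitin_sequentially
proof (intro conjI allI impI x)
  fix W assume "openin X W \<and> x \<in> W"
  then obtain k where "U k \<subseteq> W" using U by blast
  have "\<forall>n\<ge>k. s n \<in> W"
  proof (intro allI impI)
    fix n assume "k \<le> n"
    then have "U n \<subseteq> U k" using U by blast
    then show "s n \<in> W" using s \<open>U k \<subseteq> W\<close> by blast
  qed
  then show "\<exists>N. \<forall>n\<ge>N. s n \<in> W" by blast
qed

lemma US_Hausdorff:
  assumes fc: "first_countable X" and us: "US_space X"
  shows "Hausdorff_space X"
  unfolding Hausdorff_space_def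
proof (intro allI impI)
  fix x y assume h: "x \<in> topspace X \<and> y \<in> topspace X \<and> x \<noteq> y"
  have hx: "x \<in> topspace X" and hy: "y \<in> topspace X" using h by auto
  obtain U :: "nat \<Rightarrow> 'a set" where U: "(\<forall>n. openin X (U n) \<and> x \<in> U n) \<and> (\<forall>n m. n \<le> m \<longrightarrow> U m \<subseteq> U n)
          \<and> (\<forall>W. openin X W \<and> x \<in> W \<longrightarrow> (\<exists>n. U n \<subseteq> W))"
    using fc_base[OF fc hx] by (rule exE)
  obtain V :: "nat \<Rightarrow> 'a set" where V: "(\<forall>n. openin X (V n) \<and> y \<in> V n) \<and> (\<forall>n m. n \<le> m \<longrightarrow> V m \<subseteq> V n)
          \<and> (\<forall>W. openin X W \<and> y \<in> W \<longrightarrow> (\<exists>n. V n \<subseteq> W))"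
    using fc_base[OF fc hy] by (rule exE)
  show "\<exists>U V. openin X U \<and> openin X V \<and> x \<in> U \<and> y \<in> V \<and> disjnt U V"
  proof (rule ccontr)
    assume nn: "\<not> ?thesis"
    have "\<exists>z. z \<in> U n \<and> z \<in> V n" for n
    proof (rule ccontr)
      assume "\<not> (\<exists>z. z \<in> U n \<and> z \<in> V n)"
      then have d: "disjnt (U n) (V n)" by (auto simp: disjnt_def)
      have "openin X (U n) \<and> x \<in> U n" using U by blast
      moreover have "openin X (V n) \<and> y \<in> V n" using V by blast
      ultimately have "openin X (U n) \<and> openin X (V n) \<and> x \<in> U n \<and> y \<in> V n \<and> disjnt (U n) (V n)"
        using d by blast
      then have "\<exists>U V. openin X U \<and> openin X V \<and> x \<in> U \<and> y \<in> V \<and> disjnt U V" by (intro exI)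
      then show False using nn by (rule notE[rotated])
    qed
    then have "\<forall>n. \<exists>z. z \<in> U n \<and> z \<in> V n" by (rule allI)
    then have "\<exists>s. \<forall>n. s n \<in> U n \<and> s n \<in> V n" by (rule choice)
    then obtain s where s: "\<forall>n. s n \<in> U n \<and> s n \<in> V n" by (rule exE)
    have sU: "\<forall>n. s n \<in> U n" using s by simp
    have sV: "\<forall>n. s n \<in> V n" using s by simp
    have l1: "limitin X s x sequentially" by (rule seq_lim[OF U sU hx])
    have l2: "limitin X s y sequentially" by (rule seq_lim[OF V sV hy])
    have "s n \<in> topspace X" for n
    proof -
      have "openin X (U n)" using U by blast
      then show ?thesis using sU openin_subset by blast
    qed
    then have "(\<forall>n. s n \<in> topspace X) \<and> limitin X s x sequentially \<and> limitin X s y sequentially"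
      using l1 l2 by blast
    then have "x = y" using us unfolding US_space_def by blast
    then show False using h by simp
  qed
qed

theorem mainTheorem4:
  shows "(\<forall>X :: 'a topology. first_countable X \<longrightarrow>
            ((Hausdorff_space X \<longleftrightarrow> kd_space X) \<and>
             (kd_space X \<longleftrightarrow> kc_space X) \<and>
             (kc_space X \<longleftrightarrow> US_space X)))
       \<and> (\<forall>X :: 'a topology. semi_regular X \<longrightarrow> (kd_space X \<longleftrightarrow> kc_space X))"
proof (rule conjI)
  show "\<forall>X :: 'a topology. semi_regular X \<longrightarrow> (kd_space X \<longleftrightarrow> kc_space X)"
  proof (intro allI impI)
    fix X :: "'a topology"
    assume sr: "semi_regular X"
    show "kd_space X = kc_space X"
    proof
      assume "kd_space X" then show "kc_space X" by (rule kd_imp_kc)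
    next
      assume "kc_space X"
      then have k: "\<forall>S. compactin X S \<longrightarrow> closedin X S" unfolding kc_space_def .
      from sr have "\<forall>U x. openin X U \<and> x \<in> U \<longrightarrow> (\<exists>V. regular_openin X V \<and> x \<in> V \<and> V \<subseteq> U)"
        unfolding semi_regular_def .
      then show "kd_space X" using k by (rule semi_kc_kd)
    qed
  qed
  show "\<forall>X :: 'a topology. first_countable X \<longrightarrow>
            ((Hausdorff_space X \<longleftrightarrow> kd_space X) \<and>
             (kd_space X \<longleftrightarrow> kc_space X) \<and>
             (kc_space X \<longleftrightarrow> US_space X))"
  proof (intro allI impI)
  fix X :: "'a topology"
  assume fc: "first_countable X"
  have 1: "Hausdorff_space X \<Longrightarrow> kd_space X" by (rule Hausdorff_kd)
  have 2: "kd_space X \<Longrightarrow> kc_space X" by (rule kd_imp_kc)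
  have 3: "kc_space X \<Longrightarrow> US_space X" by (rule kc_US)
  have 4: "US_space X \<Longrightarrow> Hausdorff_space X" by (rule US_Hausdorff[OF fc])
  show "(Hausdorff_space X = kd_space X) \<and> (kd_space X = kc_space X) \<and> (kc_space X = US_space X)"
    using 1 2 3 4 by blast
  qed
qed

end
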